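(* Let $n\ge1$ and let $\alpha=(\alpha_t)_{t\ge2},\beta=(\beta_t)_{t\ge2},\gamma=(\gamma_t)_{t\ge2},\delta=(\delta_t)_{t\ge2}$ be sequences of nonnegative integers. The number of Type OC permutations $\sigma\in\mathfrak S_n$ with $\mathrm{nu}_t(\sigma)=\alpha_t$, $\mathrm{cu}_t(\sigma)=\beta_t$, $\mathrm{nl}_t(\sigma)=\gamma_t$, $\mathrm{cl}_t(\sigma)=\delta_t$ for all $t\ge2$ equals the number of Type OC permutations $\sigma\in\mathfrak S_n$ with $\mathrm{nu}_t(\sigma)=\beta_t$, $\mathrm{cu}_t(\sigma)=\alpha_t$, $\mathrm{nl}_t(\sigma)=\delta_t$, $\mathrm{cl}_t(\sigma)=\gamma_t$ for all $t\ge2$. That is, the label $(\mathrm{nu}_2,\dots;\mathrm{cu}_2,\dots;\mathrm{nl}_2,\dots;\mathrm{cl}_2,\dots)$ and the label $(\mathrm{cu}_2,\dots;\mathrm{nu}_2,\dots;\mathrm{cl}_2,\dots;\mathrm{nl}_2,\dots)$ are equidistributed over Type OC permutations of $[n]$.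
   Context: For $\sigma\in\mathfrak S_n$: the upper arcs of $\sigma$ are the pairs $(a,\sigma(a))$ with $a\le\sigma(a)$ (a fixed point gives a loop $(a,a)$); the lower arcs are the pairs $(\sigma(a),a)$ with $\sigma(a)<a$. An element $x\in[n]$ is an upper opener if $x\le\sigma(x)$, an upper closer if $\sigma^{-1}(x)\le x$, a lower opener if $\sigma^{-1}(x)>x$, and a lower closer if $\sigma(x)<x$. For $t\ge2$: an upper $t$-crossing (enhanced) is a set of $t$ upper arcs $(a_1,b_1),\dots,(a_t,b_t)$ with $a_1<\dots<a_t\le b_1<b_2<\dots<b_t$; an upper $t$-nesting (enhanced) is a set of $t$ upper arcs with $a_1<\dots<a_t\le b_t<b_{t-1}<\dots<b_1$; a lower $t$-crossing is a set of $t$ lower arcs $(c_1,d_1),\dots,(c_t,d_t)$ with $c_1<\dots<c_t<d_1<\dots<d_t$; a lower $t$-nesting is a set of $t$ lower arcs with $c_1<\dots<c_t<d_t<\dots<d_1$. Let $\mathrm{nu}_t(\sigma),\mathrm{cu}_t(\sigma),\mathrm{nl}_t(\sigma),\mathrm{cl}_t(\sigma)$ be the numbers of upper $t$-nestings, upper $t$-crossings, lower $t$-nestings and lower $t$-crossings of $\sigma$. $\sigma$ is of Type OC if there are integers $0=s_0<s_1<\dots<s_r=n$ such that each interval $I=[s_{q-1}+1,s_q]$ satisfies $\sigma(I)=I$ and: (a) every lower opener in $I$ is strictly smaller than every lower closer in $I$ (in particular no element is both); (b) there are no $x<y$ in $I$ with $x$ an upper closer and $y$ an upper opener. *)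

theory Defs
  imports "HOL-Combinatorics.Permutations"
begin

text \<open>Permutations of [n] = {1..n} are functions sigma :: nat => nat with sigma permutes {1..n}.\<close>

definition upper_arcs :: "nat \<Rightarrow> (nat \<Rightarrow> nat) \<Rightarrow> (nat \<times> nat) set" where
  "upper_arcs n \<sigma> = {(a, \<sigma> a) | a. a \<in> {1..n} \<and> a \<le> \<sigma> a}"

definition lower_arcs :: "nat \<Rightarrow> (nat \<Rightarrow> nat) \<Rightarrow> (nat \<times> nat) set" where
  "lower_arcs n \<sigma> = {(\<sigma> a, a) | a. a \<in> {1..n} \<and> \<sigma> a < a}"

definition upper_opener :: "(nat \<Rightarrow> nat) \<Rightarrow> nat \<Rightarrow> bool" where
  "upper_opener \<sigma> x \<longleftrightarrow> x \<le> \<sigma> x"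
definition upper_closer :: "(nat \<Rightarrow> nat) \<Rightarrow> nat \<Rightarrow> bool" where
  "upper_closer \<sigma> x \<longleftrightarrow> inv \<sigma> x \<le> x"
definition lower_opener :: "(nat \<Rightarrow> nat) \<Rightarrow> nat \<Rightarrow> bool" where
  "lower_opener \<sigma> x \<longleftrightarrow> inv \<sigma> x > x"
definition lower_closer :: "(nat \<Rightarrow> nat) \<Rightarrow> nat \<Rightarrow> bool" where
  "lower_closer \<sigma> x \<longleftrightarrow> \<sigma> x < x"

definition is_pattern ::
  "((nat \<Rightarrow> nat) \<Rightarrow> (nat \<Rightarrow> nat) \<Rightarrow> bool) \<Rightarrow> nat \<Rightarrow> (nat \<times> nat) set \<Rightarrow> bool" where
  "is_pattern P t S \<longleftrightarrow> card S = t \<and>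
     (\<exists>a b. S = (\<lambda>i. (a i, b i)) ` {1..t} \<and> P a b)"

definition up_cross_shape :: "nat \<Rightarrow> (nat \<Rightarrow> nat) \<Rightarrow> (nat \<Rightarrow> nat) \<Rightarrow> bool" where
  "up_cross_shape t a b \<longleftrightarrow> (\<forall>i\<in>{1..<t}. a i < a (i+1) \<and> b i < b (i+1)) \<and> a t \<le> b 1"
definition up_nest_shape :: "nat \<Rightarrow> (nat \<Rightarrow> nat) \<Rightarrow> (nat \<Rightarrow> nat) \<Rightarrow> bool" where
  "up_nest_shape t a b \<longleftrightarrow> (\<forall>i\<in>{1..<t}. a i < a (i+1) \<and> b (i+1) < b i) \<and> a t \<le> b t"
definition low_cross_shape :: "nat \<Rightarrow> (nat \<Rightarrow> nat) \<Rightarrow> (nat \<Rightarrow> nat) \<Rightarrow> bool" where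
  "low_cross_shape t c d \<longleftrightarrow> (\<forall>i\<in>{1..<t}. c i < c (i+1) \<and> d i < d (i+1)) \<and> c t < d 1"
definition low_nest_shape :: "nat \<Rightarrow> (nat \<Rightarrow> nat) \<Rightarrow> (nat \<Rightarrow> nat) \<Rightarrow> bool" where
  "low_nest_shape t c d \<longleftrightarrow> (\<forall>i\<in>{1..<t}. c i < c (i+1) \<and> d (i+1) < d i) \<and> c t < d t"

definition nu :: "nat \<Rightarrow> nat \<Rightarrow> (nat \<Rightarrow> nat) \<Rightarrow> nat" where
  "nu n t \<sigma> = card {S. S \<subseteq> upper_arcs n \<sigma> \<and> is_pattern (up_nest_shape t) t S}"
definition cu :: "nat \<Rightarrow> nat \<Rightarrow> (nat \<Rightarrow> nat) \<Rightarrow> nat" where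
  "cu n t \<sigma> = card {S. S \<subseteq> upper_arcs n \<sigma> \<and> is_pattern (up_cross_shape t) t S}"
definition nl :: "nat \<Rightarrow> nat \<Rightarrow> (nat \<Rightarrow> nat) \<Rightarrow> nat" where
  "nl n t \<sigma> = card {S. S \<subseteq> lower_arcs n \<sigma> \<and> is_pattern (low_nest_shape t) t S}"
definition cl :: "nat \<Rightarrow> nat \<Rightarrow> (nat \<Rightarrow> nat) \<Rightarrow> nat" where
  "cl n t \<sigma> = card {S. S \<subseteq> lower_arcs n \<sigma> \<and> is_pattern (low_cross_shape t) t S}"

definition typeOC :: "nat \<Rightarrow> (nat \<Rightarrow> nat) \<Rightarrow> bool" where
  "typeOC n \<sigma> \<longleftrightarrow> (\<exists>r s. s 0 = 0 \<and> s r = n \<and> (\<forall>q<r. s q < s (Suc q)) \<and>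
     (\<forall>q\<in>{1..r}. let I = {s (q-1) + 1 .. s q} in
        \<sigma> ` I = I \<and>
        (\<forall>x\<in>I. \<forall>y\<in>I. lower_opener \<sigma> x \<and> lower_closer \<sigma> y \<longrightarrow> x < y) \<and>
        \<not> (\<exists>x\<in>I. \<exists>y\<in>I. x < y \<and> upper_closer \<sigma> x \<and> upper_opener \<sigma> y)))"

end

theory Submission
  imports Defs
begin


definition rk :: "nat set \<Rightarrow> nat \<Rightarrow> nat" where
  "rk A x = card {z\<in>A. z < x}"

definition revs :: "nat set \<Rightarrow> nat \<Rightarrow> nat" where
  "revs A x = (THE y. y \<in> A \<and> rk A y = card A - Suc (rk A x))"

lemma rk_mono:
  assumes "finite A" "x \<in> A" "y \<in> A" "x < y" shows "rk A x < rk A y"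
proof -
  have "{z\<in>A. z < x} \<subset> {z\<in>A. z < y}" using assms by auto
  then show ?thesis unfolding rk_def using assms(1) by (simp add: psubset_card_mono)
qed

lemma rk_lt:
  assumes "finite A" "x \<in> A" shows "rk A x < card A"
proof -
  have "{z\<in>A. z < x} \<subset> A" using assms by auto
  then show ?thesis unfolding rk_def using assms(1) by (simp add: psubset_card_mono)
qed

lemma rk_inj: assumes "finite A" shows "inj_on (rk A) A"
proof (rule inj_onI)
  fix x y assume "x \<in> A" "y \<in> A" "rk A x = rk A y"
  then show "x = y" using rk_mono[OF assms, of x y] rk_mono[OF assms, of y x]
    by (metis less_irrefl linorder_neqE_nat)
qed

lemma rk_bij: assumes "finite A" shows "bij_betw (rk A) A {..<card A}"
proof -
  have "rk A ` A \<subseteq> {..<card A}" using rk_lt[OF assms] by auto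
  moreover have "card (rk A ` A) = card {..<card A}"
    using card_image[OF rk_inj[OF assms]] by simp
  ultimately have "rk A ` A = {..<card A}" by (simp add: card_subset_eq)
  then show ?thesis using rk_inj[OF assms] by (simp add: bij_betw_def)
qed

lemma rk_ex1:
  assumes "finite A" "k < card A" shows "\<exists>!y. y \<in> A \<and> rk A y = k"
proof -
  have "k \<in> rk A ` A" using rk_bij[OF assms(1)] assms(2) by (simp add: bij_betw_def)
  then obtain y where "y \<in> A" "rk A y = k" by auto
  moreover have "\<And>z. z \<in> A \<and> rk A z = k \<Longrightarrow> z = y"
    using rk_inj[OF assms(1)] calculation by (auto dest: inj_onD)
  ultimately show ?thesis by blast
qed

lemma revs_prop:
  assumes "finite A" "x \<in> A"
  shows "revs A x \<in> A \<and> rk A (revs A x) = card A - Suc (rk A x)"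
proof -
  have "card A - Suc (rk A x) < card A" using rk_lt[OF assms] by simp
  from theI'[OF rk_ex1[OF assms(1) this]] show ?thesis unfolding revs_def by simp
qed

lemma revs_revs:
  assumes "finite A" "x \<in> A" shows "revs A (revs A x) = x"
proof -
  have 1: "revs A x \<in> A" using revs_prop[OF assms] by simp
  have "rk A (revs A (revs A x)) = rk A x"
    using revs_prop[OF assms(1) 1] revs_prop[OF assms] rk_lt[OF assms] by simp
  then show ?thesis using revs_prop[OF assms(1) 1] assms rk_inj[OF assms(1)]
    by (auto dest: inj_onD)
qed

lemma revs_anti:
  assumes "finite A" "x \<in> A" "y \<in> A" "x < y" shows "revs A y < revs A x"
proof -
  have "rk A x < rk A y" using rk_mono assms by blast
  then have lt: "rk A (revs A y) < rk A (revs A x)"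
    using revs_prop[OF assms(1,2)] revs_prop[OF assms(1,3)] rk_lt[OF assms(1,3)] by simp
  show ?thesis
  proof (rule ccontr)
    assume "\<not> ?thesis"
    then have "revs A x \<le> revs A y" by simp
    then have "rk A (revs A x) \<le> rk A (revs A y)"
      using rk_mono[OF assms(1)] revs_prop[OF assms(1,2)] revs_prop[OF assms(1,3)]
      by (metis le_eq_less_or_eq less_imp_le)
    then show False using lt by simp
  qed
qed

definition sameblk :: "(nat \<Rightarrow> nat) \<Rightarrow> nat \<Rightarrow> nat \<Rightarrow> bool" where
  "sameblk \<sigma> x y \<longleftrightarrow> (\<forall>k. \<sigma> ` {1..k} = {1..k} \<longrightarrow> (k < x \<longleftrightarrow> k < y))"

lemma sameblk_refl: "sameblk \<sigma> x x" by (simp add: sameblk_def)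
lemma sameblk_sym: "sameblk \<sigma> x y \<Longrightarrow> sameblk \<sigma> y x" by (simp add: sameblk_def)
lemma sameblk_trans: "sameblk \<sigma> x y \<Longrightarrow> sameblk \<sigma> y z \<Longrightarrow> sameblk \<sigma> x z"
  by (simp add: sameblk_def)
lemma sameblk_between: "sameblk \<sigma> x z \<Longrightarrow> x \<le> y \<Longrightarrow> y \<le> z \<Longrightarrow> sameblk \<sigma> x y"
  unfolding sameblk_def by (meson le_less_trans less_le_trans)

lemma sameblk_sigma:
  assumes "\<sigma> permutes {1..n}" "x \<ge> 1" shows "sameblk \<sigma> x (\<sigma> x)"
  unfolding sameblk_def
proof (intro allI impI)
  fix k assume h: "\<sigma> ` {1..k} = {1..k}"
  have "x \<in> {1..k} \<longleftrightarrow> \<sigma> x \<in> \<sigma> ` {1..k}"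
    using permutes_inj[OF assms(1)] by (simp add: inj_image_mem_iff)
  moreover have "\<sigma> x \<ge> 1"
  proof (rule ccontr)
    assume "\<not> \<sigma> x \<ge> 1" then have "\<sigma> x = 0" by simp
    moreover have "\<sigma> 0 = 0" using permutes_not_in[OF assms(1)] by simp
    ultimately have "x = 0" using permutes_inj[OF assms(1)] by (metis injD)
    then show False using assms by simp
  qed
  ultimately show "k < x \<longleftrightarrow> k < \<sigma> x" using h assms(2) by auto
qed

definition rho :: "nat \<Rightarrow> (nat \<Rightarrow> nat) \<Rightarrow> nat \<Rightarrow> nat" where
  "rho n \<sigma> x = (if x \<in> {1..n} then
      revs {y\<in>{1..n}. sameblk \<sigma> x y \<and> (upper_closer \<sigma> y \<longleftrightarrow> upper_closer \<sigma> x)} x else x)"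

definition phi :: "nat \<Rightarrow> (nat \<Rightarrow> nat) \<Rightarrow> nat \<Rightarrow> nat" where
  "phi n \<sigma> = rho n \<sigma> \<circ> \<sigma>"

lemma rho_out: "x \<notin> {1..n} \<Longrightarrow> rho n \<sigma> x = x"
  unfolding rho_def by (simp only: if_False)

lemma rho_in:
  assumes "x \<in> {1..n}"
  shows "rho n \<sigma> x \<in> {1..n} \<and> sameblk \<sigma> x (rho n \<sigma> x) \<and>
         (upper_closer \<sigma> (rho n \<sigma> x) \<longleftrightarrow> upper_closer \<sigma> x)"
proof -
  let ?C = "{y\<in>{1..n}. sameblk \<sigma> x y \<and> (upper_closer \<sigma> y \<longleftrightarrow> upper_closer \<sigma> x)}"
  have "x \<in> ?C" using assms sameblk_refl by auto
  then have "revs ?C x \<in> ?C" using revs_prop[of ?C x] by auto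
  then show ?thesis using assms by (simp add: rho_def)
qed

lemma class_eq:
  assumes "sameblk \<sigma> x x'" "upper_closer \<sigma> x' \<longleftrightarrow> upper_closer \<sigma> x"
  shows "{y\<in>{1..n}. sameblk \<sigma> x' y \<and> (upper_closer \<sigma> y \<longleftrightarrow> upper_closer \<sigma> x')}
       = {y\<in>{1..n}. sameblk \<sigma> x y \<and> (upper_closer \<sigma> y \<longleftrightarrow> upper_closer \<sigma> x)}"
  using assms sameblk_trans sameblk_sym by blast

lemma rho_rho: "rho n \<sigma> (rho n \<sigma> x) = x"
proof (cases "x \<in> {1..n}")
  case True
  let ?C = "{y\<in>{1..n}. sameblk \<sigma> x y \<and> (upper_closer \<sigma> y \<longleftrightarrow> upper_closer \<sigma> x)}"
  have r: "rho n \<sigma> x = revs ?C x" using True by (simp add: rho_def)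
  have ri: "rho n \<sigma> x \<in> {1..n}" and sb: "sameblk \<sigma> x (rho n \<sigma> x)"
    and uc: "upper_closer \<sigma> (rho n \<sigma> x) \<longleftrightarrow> upper_closer \<sigma> x" using rho_in[OF True] by auto
  have "rho n \<sigma> (rho n \<sigma> x) = revs ?C (rho n \<sigma> x)"
    using ri class_eq[OF sb uc, of n] by (simp add: rho_def)
  also have "\<dots> = x" unfolding r by (rule revs_revs) (use True sameblk_refl in auto)
  finally show ?thesis .
next
  case False
  then have "rho n \<sigma> x = x" unfolding rho_def by (simp only: if_False)
  then show ?thesis by simp
qed

lemma rho_inj: "inj (rho n \<sigma>)"
  by (metis injI rho_rho)

lemma rho_anti:
  assumes "x \<in> {1..n}" "y \<in> {1..n}" "sameblk \<sigma> x y"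
    "upper_closer \<sigma> y \<longleftrightarrow> upper_closer \<sigma> x" "x < y"
  shows "rho n \<sigma> y < rho n \<sigma> x"
proof -
  let ?C = "{y\<in>{1..n}. sameblk \<sigma> x y \<and> (upper_closer \<sigma> y \<longleftrightarrow> upper_closer \<sigma> x)}"
  have "rho n \<sigma> y = revs ?C y"
    using assms class_eq[OF assms(3,4), of n] by (simp add: rho_def)
  moreover have "rho n \<sigma> x = revs ?C x" using assms by (simp add: rho_def)
  ultimately show ?thesis using revs_anti[of ?C x y] assms sameblk_refl by auto
qed

lemma rho_permutes: "rho n \<sigma> permutes {1..n}"
proof (rule bij_imp_permutes)
  show "bij_betw (rho n \<sigma>) {1..n} {1..n}"
  proof (rule bij_betw_byWitness[where f'="rho n \<sigma>"])
    show "rho n \<sigma> ` {1..n} \<subseteq> {1..n}" using rho_in by blast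
    show "rho n \<sigma> ` {1..n} \<subseteq> {1..n}" using rho_in by blast
  qed (simp_all only: rho_rho ball_simps simp_thms Ball_def)
qed (rule rho_out)




locale OC =
  fixes n :: nat and \<sigma> :: "nat \<Rightarrow> nat" and r :: nat and s :: "nat \<Rightarrow> nat"
  assumes perm: "\<sigma> permutes {1..n}" and s0: "s 0 = 0" and sr: "s r = n"
    and smono: "\<forall>q<r. s q < s (Suc q)"
    and blocks: "\<forall>q\<in>{1..r}. let I = {s (q-1) + 1 .. s q} in
        \<sigma> ` I = I \<and>
        (\<forall>x\<in>I. \<forall>y\<in>I. lower_opener \<sigma> x \<and> lower_closer \<sigma> y \<longrightarrow> x < y) \<and>
        \<not> (\<exists>x\<in>I. \<exists>y\<in>I. x < y \<and> upper_closer \<sigma> x \<and> upper_opener \<sigma> y)"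

lemma typeOC_OC: "typeOC n \<sigma> \<Longrightarrow> \<sigma> permutes {1..n} \<Longrightarrow> \<exists>r s. OC n \<sigma> r s"
  unfolding typeOC_def OC_def by blast

lemma lo_iff: "lower_opener \<sigma> x \<longleftrightarrow> \<not> upper_closer \<sigma> x"
  by (auto simp: lower_opener_def upper_closer_def)
lemma lc_iff: "lower_closer \<sigma> x \<longleftrightarrow> \<not> upper_opener \<sigma> x"
  by (auto simp: lower_closer_def upper_opener_def)

context OC begin

lemma blk_all: "q \<in> {1..r} \<Longrightarrow> \<sigma> ` {s (q-1) + 1 .. s q} = {s (q-1) + 1 .. s q} \<and>
        (\<forall>x\<in>{s (q-1) + 1 .. s q}. \<forall>y\<in>{s (q-1) + 1 .. s q}. lower_opener \<sigma> x \<and> lower_closer \<sigma> y \<longrightarrow> x < y) \<and>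
        \<not> (\<exists>x\<in>{s (q-1) + 1 .. s q}. \<exists>y\<in>{s (q-1) + 1 .. s q}. x < y \<and> upper_closer \<sigma> x \<and> upper_opener \<sigma> y)"
  using blocks unfolding Let_def by blast

lemma blk_inv: "q \<in> {1..r} \<Longrightarrow> \<sigma> ` {s (q-1) + 1 .. s q} = {s (q-1) + 1 .. s q}"
  using blk_all by blast

lemma blk_A: "q \<in> {1..r} \<Longrightarrow> x \<in> {s (q-1) + 1 .. s q} \<Longrightarrow> y \<in> {s (q-1) + 1 .. s q}
   \<Longrightarrow> lower_opener \<sigma> x \<Longrightarrow> lower_closer \<sigma> y \<Longrightarrow> x < y"
  using blk_all by blast

lemma blk_B: "q \<in> {1..r} \<Longrightarrow> x \<in> {s (q-1) + 1 .. s q} \<Longrightarrow> y \<in> {s (q-1) + 1 .. s q}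
   \<Longrightarrow> upper_closer \<sigma> x \<Longrightarrow> upper_opener \<sigma> y \<Longrightarrow> y \<le> x"
  using blk_all by (meson not_le)

lemma cut_s: "q \<le> r \<Longrightarrow> \<sigma> ` {1..s q} = {1..s q}"
proof (induction q)
  case 0 then show ?case using s0 by simp
next
  case (Suc q)
  have lt: "s q < s (Suc q)" using smono Suc by simp
  have "{1..s (Suc q)} = {1..s q} \<union> {s (Suc q - 1) + 1 .. s (Suc q)}" using lt by auto
  moreover have "\<sigma> ` {s (Suc q - 1) + 1 .. s (Suc q)} = {s (Suc q - 1) + 1 .. s (Suc q)}"
    using blk_inv[of "Suc q"] Suc by simp
  ultimately show ?case using Suc by (simp add: image_Un)
qed

lemma blk_ex: assumes "x \<in> {1..n}" shows "\<exists>q\<in>{1..r}. x \<in> {s (q-1) + 1 .. s q}"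
proof -
  define q where "q = (LEAST q. x \<le> s q)"
  have ex: "x \<le> s r" using assms sr by simp
  have 1: "x \<le> s q" unfolding q_def by (rule LeastI[of _ r]) (rule ex)
  have 2: "q \<le> r" unfolding q_def by (rule Least_le) (rule ex)
  have 3: "q \<noteq> 0"
  proof
    assume "q = 0" then have "x \<le> 0" using 1 s0 by simp
    then show False using assms by simp
  qed
  have 4: "\<not> x \<le> s (q-1)" unfolding q_def by (rule not_less_Least) (use 3 q_def in simp)
  show ?thesis using 1 2 3 4 by (intro bexI[of _ q]) auto
qed

lemma interior:
  assumes q: "q \<in> {1..r}" and k1: "s (q-1) < k" and k2: "k < s q"
    and cut: "\<sigma> ` {1..k} = {1..k}"
  shows False
proof -
  have kin: "k \<in> {s (q-1) + 1 .. s q}" and k1in: "k+1 \<in> {s (q-1) + 1 .. s q}"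
    using k1 k2 by auto
  have "k \<in> \<sigma> ` {1..k}" using cut k1 by auto
  then obtain z where z: "z \<in> {1..k}" "\<sigma> z = k" by auto
  have "inv \<sigma> k = z" using z permutes_inv_eq[OF perm] by simp
  then have uc: "upper_closer \<sigma> k" using z by (simp add: upper_closer_def)
  have nin: "\<sigma> (k+1) \<notin> {1..k}"
  proof
    assume "\<sigma> (k+1) \<in> {1..k}"
    then have "\<sigma> (k+1) \<in> \<sigma> ` {1..k}" using cut by simp
    then have "k+1 \<in> {1..k}" using permutes_inj[OF perm] by (simp add: inj_image_mem_iff)
    then show False by simp
  qed
  have "\<sigma> (k+1) \<noteq> 0"
  proof
    assume "\<sigma> (k+1) = 0"
    moreover have "\<sigma> 0 = 0" using permutes_not_in[OF perm] by simp
    ultimately have "k+1 = 0" using permutes_inj[OF perm] by (metis injD)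
    then show False by simp
  qed
  then have "k+1 \<le> \<sigma> (k+1)" using nin by auto
  then have uo: "upper_opener \<sigma> (k+1)" by (simp add: upper_opener_def)
  have "k + 1 \<le> k" using blk_B[OF q kin k1in uc uo] .
  then show False by simp
qed

lemma same_blk:
  assumes "x \<in> {1..n}" "sameblk \<sigma> x y"
  shows "\<exists>q\<in>{1..r}. x \<in> {s (q-1) + 1 .. s q} \<and> y \<in> {s (q-1) + 1 .. s q}"
proof -
  obtain q where q: "q \<in> {1..r}" "x \<in> {s (q-1) + 1 .. s q}" using blk_ex[OF assms(1)] by blast
  have c1: "\<sigma> ` {1..s (q-1)} = {1..s (q-1)}" by (rule cut_s) (use q in auto)
  have c2: "\<sigma> ` {1..s q} = {1..s q}" using cut_s q by simp
  have "s (q-1) < x \<longleftrightarrow> s (q-1) < y" using assms(2) c1 unfolding sameblk_def by blast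
  moreover have "s q < x \<longleftrightarrow> s q < y" using assms(2) c2 unfolding sameblk_def by blast
  ultimately have "s (q-1) < y" "\<not> s q < y" using q by auto
  then show ?thesis using q by auto
qed

lemma blk_same:
  assumes q: "q \<in> {1..r}" and x: "x \<in> {s (q-1) + 1 .. s q}" and y: "y \<in> {s (q-1) + 1 .. s q}"
  shows "sameblk \<sigma> x y"
  unfolding sameblk_def
proof (intro allI impI)
  fix k assume c: "\<sigma> ` {1..k} = {1..k}"
  show "k < x \<longleftrightarrow> k < y"
  proof (rule ccontr)
    assume "\<not> ?thesis"
    then have "(y \<le> k \<and> k < x) \<or> (x \<le> k \<and> k < y)" by auto
    then have "s (q-1) < k \<and> k < s q" using x y by auto
    then show False using interior[OF q _ _ c] by auto
  qed
qed

lemma condA: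
  assumes "x \<in> {1..n}" "sameblk \<sigma> x y" "lower_opener \<sigma> x" "lower_closer \<sigma> y"
  shows "x < y"
  using same_blk[OF assms(1,2)] blk_A assms(3,4) by blast

lemma condB:
  assumes "x \<in> {1..n}" "sameblk \<sigma> x y" "upper_closer \<sigma> x" "upper_opener \<sigma> y"
  shows "y \<le> x"
  using same_blk[OF assms(1,2)] blk_B assms(3,4) by blast

lemma phi_perm: "phi n \<sigma> permutes {1..n}"
  unfolding phi_def by (rule permutes_compose[OF perm rho_permutes])

lemma op_phi: "x \<le> phi n \<sigma> x \<longleftrightarrow> x \<le> \<sigma> x"
proof (cases "x \<in> {1..n}")
  case False
  then have "\<sigma> x = x" using permutes_not_in[OF perm] by simp
  then show ?thesis using False by (simp add: phi_def rho_out)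
next
  case True
  have sx: "\<sigma> x \<in> {1..n}" using True permutes_in_image[OF perm] by simp
  have sb: "sameblk \<sigma> x (\<sigma> x)" using sameblk_sigma[OF perm] True by simp
  have invx: "inv \<sigma> (\<sigma> x) = x" using permutes_inverses[OF perm] by simp
  have r: "rho n \<sigma> (\<sigma> x) \<in> {1..n}" "sameblk \<sigma> (\<sigma> x) (rho n \<sigma> (\<sigma> x))"
    "upper_closer \<sigma> (rho n \<sigma> (\<sigma> x)) \<longleftrightarrow> upper_closer \<sigma> (\<sigma> x)"
    using rho_in[OF sx] by auto
  have sb2: "sameblk \<sigma> (rho n \<sigma> (\<sigma> x)) x"
    using sb r(2) sameblk_trans sameblk_sym by blast
  show ?thesis
  proof (cases "x \<le> \<sigma> x")
    case True
    then have "upper_closer \<sigma> (\<sigma> x)" using invx by (simp add: upper_closer_def)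
    then have "upper_closer \<sigma> (rho n \<sigma> (\<sigma> x))" using r by simp
    moreover have "upper_opener \<sigma> x" using True by (simp add: upper_opener_def)
    ultimately have "x \<le> rho n \<sigma> (\<sigma> x)" using condB[OF r(1) sb2] by blast
    then show ?thesis using True by (simp add: phi_def)
  next
    case False
    then have "\<not> upper_closer \<sigma> (\<sigma> x)" using invx by (simp add: upper_closer_def)
    then have "lower_opener \<sigma> (rho n \<sigma> (\<sigma> x))" using r by (simp add: lo_iff)
    moreover have "lower_closer \<sigma> x" using False by (simp add: lower_closer_def)
    ultimately have "rho n \<sigma> (\<sigma> x) < x" using condA[OF r(1) sb2] by blast
    then show ?thesis using False by (simp add: phi_def)
  qed
qed

lemma uc_phi: "upper_closer (phi n \<sigma>) y \<longleftrightarrow> upper_closer \<sigma> y"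
proof -
  define x where "x = inv (phi n \<sigma>) y"
  have px: "phi n \<sigma> x = y" unfolding x_def using permutes_inverses[OF phi_perm] by simp
  show ?thesis
  proof (cases "y \<in> {1..n}")
    case False
    then have "x \<notin> {1..n}" using px permutes_in_image[OF phi_perm] by blast
    then have "phi n \<sigma> x = x" using permutes_not_in[OF phi_perm] by simp
    then have "x = y" using px by simp
    moreover have "\<sigma> y = y" using False permutes_not_in[OF perm] by simp
    then have "inv \<sigma> y = y" using permutes_inv_eq[OF perm] by simp
    ultimately show ?thesis unfolding upper_closer_def x_def[symmetric] by simp
  next
    case True
    have "rho n \<sigma> (\<sigma> x) = y" using px by (simp add: phi_def)
    then have sx: "\<sigma> x = rho n \<sigma> y" using rho_rho by metis
    have "upper_closer \<sigma> y \<longleftrightarrow> upper_closer \<sigma> (rho n \<sigma> y)" using rho_in[OF True] by simp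
    also have "\<dots> \<longleftrightarrow> x \<le> \<sigma> x"
      unfolding upper_closer_def sx[symmetric] using permutes_inverses[OF perm] by simp
    also have "\<dots> \<longleftrightarrow> x \<le> phi n \<sigma> x" using op_phi by simp
    also have "\<dots> \<longleftrightarrow> upper_closer (phi n \<sigma>) y"
      unfolding upper_closer_def x_def[symmetric] using px by simp
    finally show ?thesis by simp
  qed
qed

lemma uo_phi: "upper_opener (phi n \<sigma>) x \<longleftrightarrow> upper_opener \<sigma> x"
  using op_phi by (simp add: upper_opener_def)

lemma OC_phi: "OC n (phi n \<sigma>) r s"
proof -
  have "\<forall>q\<in>{1..r}. let I = {s (q-1) + 1 .. s q} in
        phi n \<sigma> ` I = I \<and>
        (\<forall>x\<in>I. \<forall>y\<in>I. lower_opener (phi n \<sigma>) x \<and> lower_closer (phi n \<sigma>) y \<longrightarrow> x < y) \<and>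
        \<not> (\<exists>x\<in>I. \<exists>y\<in>I. x < y \<and> upper_closer (phi n \<sigma>) x \<and> upper_opener (phi n \<sigma>) y)"
  proof
    fix q assume q: "q \<in> {1..r}"
    define I where "I = {s (q-1) + 1 .. s q}"
    have c1: "\<sigma> ` {1..s (q-1)} = {1..s (q-1)}" by (rule cut_s) (use q in auto)
    have c2: "\<sigma> ` {1..s q} = {1..s q}" using cut_s q by simp
    have rI: "rho n \<sigma> x \<in> I" if "x \<in> I" for x
    proof (cases "x \<in> {1..n}")
      case True
      have "sameblk \<sigma> x (rho n \<sigma> x)" using rho_in[OF True] by simp
      then have "s (q-1) < x \<longleftrightarrow> s (q-1) < rho n \<sigma> x" "s q < x \<longleftrightarrow> s q < rho n \<sigma> x"
        using c1 c2 unfolding sameblk_def by blast+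
      then show ?thesis using that unfolding I_def by auto
    qed (use that rho_out in simp)
    have rhoI: "rho n \<sigma> ` I = I"
    proof
      show "rho n \<sigma> ` I \<subseteq> I" using rI by auto
      show "I \<subseteq> rho n \<sigma> ` I"
      proof
        fix x assume "x \<in> I"
        then have "rho n \<sigma> x \<in> I" by (rule rI)
        moreover have "x = rho n \<sigma> (rho n \<sigma> x)" by (simp add: rho_rho)
        ultimately show "x \<in> rho n \<sigma> ` I" by blast
      qed
    qed
    have pI: "phi n \<sigma> ` I = rho n \<sigma> ` (\<sigma> ` I)" unfolding phi_def by (rule image_comp[symmetric])
    have "phi n \<sigma> ` I = I" unfolding pI using blk_inv[OF q] rhoI unfolding I_def by simp
    moreover have "\<forall>x\<in>I. \<forall>y\<in>I. lower_opener (phi n \<sigma>) x \<and> lower_closer (phi n \<sigma>) y \<longrightarrow> x < y"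
      using blk_A[OF q] unfolding I_def lo_iff[of "phi n \<sigma>"] lc_iff[of "phi n \<sigma>"] uc_phi uo_phi lo_iff[symmetric] lc_iff[symmetric] by blast
    moreover have "\<not> (\<exists>x\<in>I. \<exists>y\<in>I. x < y \<and> upper_closer (phi n \<sigma>) x \<and> upper_opener (phi n \<sigma>) y)"
      using blk_B[OF q] unfolding I_def uc_phi uo_phi by (meson not_le)
    ultimately show "let I = {s (q-1) + 1 .. s q} in
        phi n \<sigma> ` I = I \<and>
        (\<forall>x\<in>I. \<forall>y\<in>I. lower_opener (phi n \<sigma>) x \<and> lower_closer (phi n \<sigma>) y \<longrightarrow> x < y) \<and>
        \<not> (\<exists>x\<in>I. \<exists>y\<in>I. x < y \<and> upper_closer (phi n \<sigma>) x \<and> upper_opener (phi n \<sigma>) y)"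
      unfolding Let_def I_def[symmetric] by (intro conjI)
  qed
  then show ?thesis using phi_perm s0 sr smono by (simp add: OC_def)
qed

end



lemma chain_le:
  assumes "\<forall>i\<in>{1..<t}. (a::nat\<Rightarrow>nat) i < a (i+1)" "1 \<le> i" "i \<le> j" "j \<le> t"
  shows "a i \<le> a j"
  using assms(3,4)
proof (induction j)
  case 0 then show ?case using assms(2) by simp
next
  case (Suc j)
  show ?case
  proof (cases "i = Suc j")
    case False
    then have "i \<le> j" using Suc by simp
    then have "a i \<le> a j" using Suc by simp
    moreover have "j \<in> {1..<t}" using \<open>i \<le> j\<close> assms(2) Suc by simp
    ultimately show ?thesis using assms(1) by fastforce
  qed simp
qed

lemma chain_ge:
  assumes "\<forall>i\<in>{1..<t}. (a::nat\<Rightarrow>nat) (i+1) < a i" "1 \<le> i" "i \<le> j" "j \<le> t"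
  shows "a j \<le> a i"
  using assms(3,4)
proof (induction j)
  case 0 then show ?case using assms(2) by simp
next
  case (Suc j)
  show ?case
  proof (cases "i = Suc j")
    case False
    then have "i \<le> j" using Suc by simp
    then have "a j \<le> a i" using Suc by simp
    moreover have "j \<in> {1..<t}" using \<open>i \<le> j\<close> assms(2) Suc by simp
    ultimately show ?thesis using assms(1) by fastforce
  qed simp
qed

lemma rev_img: "(\<lambda>i. t + 1 - i) ` {1..(t::nat)} = {1..t}"
proof
  show "{1..t} \<subseteq> (\<lambda>i. t + 1 - i) ` {1..t}"
  proof
    fix j assume "j \<in> {1..t}"
    then show "j \<in> (\<lambda>i. t + 1 - i) ` {1..t}" by (intro image_eqI[where x="t+1-j"]) auto
  qed
qed auto

definition fu :: "nat \<Rightarrow> (nat \<Rightarrow> nat) \<Rightarrow> nat \<times> nat \<Rightarrow> nat \<times> nat" where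
  "fu n \<sigma> p = (fst p, rho n \<sigma> (snd p))"
definition fl :: "nat \<Rightarrow> (nat \<Rightarrow> nat) \<Rightarrow> nat \<times> nat \<Rightarrow> nat \<times> nat" where
  "fl n \<sigma> p = (rho n \<sigma> (fst p), snd p)"

lemma fu_fu: "fu n \<sigma> (fu n \<sigma> p) = p" by (simp add: fu_def rho_rho)
lemma fl_fl: "fl n \<sigma> (fl n \<sigma> p) = p" by (simp add: fl_def rho_rho)
lemma fu_inj: "inj (fu n \<sigma>)" by (metis injI fu_fu)
lemma fl_inj: "inj (fl n \<sigma>)" by (metis injI fl_fl)
lemma fu_ff: "fu n \<sigma> ` (fu n \<sigma> ` A) = A" by (simp add: image_image fu_fu)
lemma fl_ff: "fl n \<sigma> ` (fl n \<sigma> ` A) = A" by (simp add: image_image fl_fl)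

context OC begin

lemma ua_mem: "p \<in> upper_arcs n \<sigma> \<Longrightarrow> fst p \<in> {1..n} \<and> snd p = \<sigma> (fst p) \<and> fst p \<le> snd p"
  by (auto simp: upper_arcs_def)
lemma la_mem: "p \<in> lower_arcs n \<sigma> \<Longrightarrow> snd p \<in> {1..n} \<and> fst p = \<sigma> (snd p) \<and> fst p < snd p"
  by (auto simp: lower_arcs_def)

lemma sbs: "x \<in> {1..n} \<Longrightarrow> sameblk \<sigma> x (\<sigma> x)"
  using sameblk_sigma[OF perm] by simp

lemma inS: "x \<in> {1..n} \<Longrightarrow> \<sigma> x \<in> {1..n}"
  using permutes_in_image[OF perm] by simp

lemma up_arcs_phi: "upper_arcs n (phi n \<sigma>) = fu n \<sigma> ` upper_arcs n \<sigma>"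
proof
  show "upper_arcs n (phi n \<sigma>) \<subseteq> fu n \<sigma> ` upper_arcs n \<sigma>"
  proof
    fix p assume "p \<in> upper_arcs n (phi n \<sigma>)"
    then obtain a where a: "p = (a, phi n \<sigma> a)" "a \<in> {1..n}" "a \<le> phi n \<sigma> a"
      by (auto simp: upper_arcs_def)
    then have "(a, \<sigma> a) \<in> upper_arcs n \<sigma>" using op_phi by (auto simp: upper_arcs_def)
    moreover have "p = fu n \<sigma> (a, \<sigma> a)" using a by (simp add: fu_def phi_def)
    ultimately show "p \<in> fu n \<sigma> ` upper_arcs n \<sigma>" by blast
  qed
  show "fu n \<sigma> ` upper_arcs n \<sigma> \<subseteq> upper_arcs n (phi n \<sigma>)"
  proof
    fix p assume "p \<in> fu n \<sigma> ` upper_arcs n \<sigma>"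
    then obtain a where a: "p = fu n \<sigma> (a, \<sigma> a)" "a \<in> {1..n}" "a \<le> \<sigma> a"
      by (auto simp: upper_arcs_def)
    then have "p = (a, phi n \<sigma> a)" by (simp add: fu_def phi_def)
    then show "p \<in> upper_arcs n (phi n \<sigma>)" using a op_phi by (auto simp: upper_arcs_def)
  qed
qed

lemma low_arcs_phi: "lower_arcs n (phi n \<sigma>) = fl n \<sigma> ` lower_arcs n \<sigma>"
proof
  show "lower_arcs n (phi n \<sigma>) \<subseteq> fl n \<sigma> ` lower_arcs n \<sigma>"
  proof
    fix p assume "p \<in> lower_arcs n (phi n \<sigma>)"
    then obtain a where a: "p = (phi n \<sigma> a, a)" "a \<in> {1..n}" "phi n \<sigma> a < a"
      by (auto simp: lower_arcs_def)
    then have "(\<sigma> a, a) \<in> lower_arcs n \<sigma>" using op_phi[of a] by (auto simp: lower_arcs_def)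
    moreover have "p = fl n \<sigma> (\<sigma> a, a)" using a by (simp add: fl_def phi_def)
    ultimately show "p \<in> fl n \<sigma> ` lower_arcs n \<sigma>" by blast
  qed
  show "fl n \<sigma> ` lower_arcs n \<sigma> \<subseteq> lower_arcs n (phi n \<sigma>)"
  proof
    fix p assume "p \<in> fl n \<sigma> ` lower_arcs n \<sigma>"
    then obtain a where a: "p = fl n \<sigma> (\<sigma> a, a)" "a \<in> {1..n}" "\<sigma> a < a"
      by (auto simp: lower_arcs_def)
    then have "p = (phi n \<sigma> a, a)" by (simp add: fl_def phi_def)
    then show "p \<in> lower_arcs n (phi n \<sigma>)" using a op_phi[of a] by (auto simp: lower_arcs_def)
  qed
qed

lemma up_cn:
  assumes sub: "S \<subseteq> upper_arcs n \<sigma>" and t: "t \<ge> 1" and pat: "is_pattern (up_cross_shape t) t S"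
  shows "is_pattern (up_nest_shape t) t (fu n \<sigma> ` S)"
proof -
  obtain a b where S: "S = (\<lambda>i. (a i, b i)) ` {1..t}" and sh: "up_cross_shape t a b"
    and c: "card S = t" using pat by (auto simp: is_pattern_def)
  have arc: "a i \<in> {1..n} \<and> b i = \<sigma> (a i) \<and> a i \<le> b i" if "i \<in> {1..t}" for i
  proof -
    have "(a i, b i) \<in> upper_arcs n \<sigma>" using sub S that by blast
    from ua_mem[OF this] show ?thesis by simp
  qed
  have ca: "\<forall>i\<in>{1..<t}. a i < a (i+1)" and cb: "\<forall>i\<in>{1..<t}. b i < b (i+1)"
    and ab: "a t \<le> b 1" using sh by (auto simp: up_cross_shape_def)
  have t1: "1 \<in> {1..t}" "t \<in> {1..t}" using t by auto
  have sb1: "sameblk \<sigma> (a 1) (b 1)" using sbs arc[OF t1(1)] by simp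
  have sbb: "sameblk \<sigma> (a 1) (b i)" if i: "i \<in> {1..t}" for i
  proof -
    have "a 1 \<le> a i" "a i \<le> a t" using chain_le[OF ca] i by auto
    then have "sameblk \<sigma> (a 1) (a i)" using sameblk_between[OF sb1] ab by simp
    moreover have "sameblk \<sigma> (a i) (b i)" using sbs arc[OF i] by simp
    ultimately show ?thesis using sameblk_trans by blast
  qed
  have sba: "sameblk \<sigma> (a 1) (a i)" if i: "i \<in> {1..t}" for i
  proof -
    have "a 1 \<le> a i" "a i \<le> a t" using chain_le[OF ca] i by auto
    then show ?thesis using sameblk_between[OF sb1] ab by simp
  qed
  have ucb: "upper_closer \<sigma> (b i)" if i: "i \<in> {1..t}" for i
    using arc[OF i] permutes_inverses[OF perm] by (simp add: upper_closer_def)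
  have bin: "b i \<in> {1..n}" if i: "i \<in> {1..t}" for i using arc[OF i] inS by simp
  have sh2: "up_nest_shape t a (\<lambda>i. rho n \<sigma> (b i))"
    unfolding up_nest_shape_def
  proof (intro conjI ballI)
    fix i assume i: "i \<in> {1..<t}"
    then have i1: "i \<in> {1..t}" "i+1 \<in> {1..t}" by auto
    show "a i < a (i+1)" using ca i by simp
    have "sameblk \<sigma> (b i) (b (i+1))" using sbb[OF i1(1)] sbb[OF i1(2)] sameblk_sym sameblk_trans by blast
    then show "rho n \<sigma> (b (i+1)) < rho n \<sigma> (b i)"
      using rho_anti[OF bin[OF i1(1)] bin[OF i1(2)]] ucb[OF i1(1)] ucb[OF i1(2)] cb i by simp
  next
    have r: "rho n \<sigma> (b t) \<in> {1..n}" "sameblk \<sigma> (b t) (rho n \<sigma> (b t))"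
      "upper_closer \<sigma> (rho n \<sigma> (b t))" using rho_in[OF bin[OF t1(2)]] ucb[OF t1(2)] by auto
    have "sameblk \<sigma> (rho n \<sigma> (b t)) (a t)"
      using r(2) sbb[OF t1(2)] sba[OF t1(2)] sameblk_sym sameblk_trans by blast
    moreover have "upper_opener \<sigma> (a t)" using arc[OF t1(2)] by (simp add: upper_opener_def)
    ultimately show "a t \<le> rho n \<sigma> (b t)" using condB[OF r(1)] r(3) by blast
  qed
  have img: "fu n \<sigma> ` S = (\<lambda>i. (a i, rho n \<sigma> (b i))) ` {1..t}"
    unfolding S image_image by (simp add: fu_def)
  have "card (fu n \<sigma> ` S) = t" using c card_image[OF inj_on_subset[OF fu_inj]] by auto
  then show ?thesis unfolding is_pattern_def using img sh2
    by (intro conjI exI[of _ a] exI[of _ "\<lambda>i. rho n \<sigma> (b i)"]) auto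
qed

lemma up_nc:
  assumes sub: "S \<subseteq> upper_arcs n \<sigma>" and t: "t \<ge> 1" and pat: "is_pattern (up_nest_shape t) t S"
  shows "is_pattern (up_cross_shape t) t (fu n \<sigma> ` S)"
proof -
  obtain a b where S: "S = (\<lambda>i. (a i, b i)) ` {1..t}" and sh: "up_nest_shape t a b"
    and c: "card S = t" using pat by (auto simp: is_pattern_def)
  have arc: "a i \<in> {1..n} \<and> b i = \<sigma> (a i) \<and> a i \<le> b i" if "i \<in> {1..t}" for i
  proof -
    have "(a i, b i) \<in> upper_arcs n \<sigma>" using sub S that by blast
    from ua_mem[OF this] show ?thesis by simp
  qed
  have ca: "\<forall>i\<in>{1..<t}. a i < a (i+1)" and cb: "\<forall>i\<in>{1..<t}. b (i+1) < b i"
    and ab: "a t \<le> b t" using sh by (auto simp: up_nest_shape_def)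
  have t1: "1 \<in> {1..t}" "t \<in> {1..t}" using t by auto
  have sb1: "sameblk \<sigma> (a 1) (b 1)" using sbs arc[OF t1(1)] by simp
  have bt1: "b t \<le> b 1" using chain_ge[OF cb] t by auto
  have sba: "sameblk \<sigma> (a 1) (a i)" if i: "i \<in> {1..t}" for i
  proof -
    have "a 1 \<le> a i" "a i \<le> a t" using chain_le[OF ca] i by auto
    then show ?thesis using sameblk_between[OF sb1] ab bt1 by simp
  qed
  have sbb: "sameblk \<sigma> (a 1) (b i)" if i: "i \<in> {1..t}" for i
  proof -
    have "sameblk \<sigma> (a i) (b i)" using sbs arc[OF i] by simp
    then show ?thesis using sba[OF i] sameblk_trans by blast
  qed
  have ucb: "upper_closer \<sigma> (b i)" if i: "i \<in> {1..t}" for i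
    using arc[OF i] permutes_inverses[OF perm] by (simp add: upper_closer_def)
  have bin: "b i \<in> {1..n}" if i: "i \<in> {1..t}" for i using arc[OF i] inS by simp
  have sh2: "up_cross_shape t a (\<lambda>i. rho n \<sigma> (b i))"
    unfolding up_cross_shape_def
  proof (intro conjI ballI)
    fix i assume i: "i \<in> {1..<t}"
    then have i1: "i \<in> {1..t}" "i+1 \<in> {1..t}" by auto
    show "a i < a (i+1)" using ca i by simp
    have "sameblk \<sigma> (b (i+1)) (b i)" using sbb[OF i1(1)] sbb[OF i1(2)] sameblk_sym sameblk_trans by blast
    then show "rho n \<sigma> (b i) < rho n \<sigma> (b (i+1))"
      using rho_anti[OF bin[OF i1(2)] bin[OF i1(1)]] ucb[OF i1(1)] ucb[OF i1(2)] cb i by simp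
  next
    have r: "rho n \<sigma> (b 1) \<in> {1..n}" "sameblk \<sigma> (b 1) (rho n \<sigma> (b 1))"
      "upper_closer \<sigma> (rho n \<sigma> (b 1))" using rho_in[OF bin[OF t1(1)]] ucb[OF t1(1)] by auto
    have "sameblk \<sigma> (rho n \<sigma> (b 1)) (a t)"
      using r(2) sbb[OF t1(1)] sba[OF t1(2)] sameblk_sym sameblk_trans by blast
    moreover have "upper_opener \<sigma> (a t)" using arc[OF t1(2)] by (simp add: upper_opener_def)
    ultimately show "a t \<le> rho n \<sigma> (b 1)" using condB[OF r(1)] r(3) by blast
  qed
  have img: "fu n \<sigma> ` S = (\<lambda>i. (a i, rho n \<sigma> (b i))) ` {1..t}"
    unfolding S image_image by (simp add: fu_def)
  have "card (fu n \<sigma> ` S) = t" using c card_image[OF inj_on_subset[OF fu_inj]] by auto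
  then show ?thesis unfolding is_pattern_def using img sh2
    by (intro conjI exI[of _ a] exI[of _ "\<lambda>i. rho n \<sigma> (b i)"]) auto
qed

end



context OC begin

lemma low_common:
  fixes c d :: "nat \<Rightarrow> nat" and t :: nat
  assumes sub: "S \<subseteq> lower_arcs n \<sigma>" and t: "t \<ge> 1"
    and S: "S = (\<lambda>i. (c i, d i)) ` {1..t}"
    and cc: "\<forall>i\<in>{1..<t}. c i < c (i+1)"
    and sbd: "c t < d 1"
  shows "\<And>i. i \<in> {1..t} \<Longrightarrow> d i \<in> {1..n} \<and> c i = \<sigma> (d i) \<and> c i < d i"
    and "\<And>i. i \<in> {1..t} \<Longrightarrow> sameblk \<sigma> (c 1) (c i) \<and> sameblk \<sigma> (c 1) (d i)"
    and "\<And>i. i \<in> {1..t} \<Longrightarrow> c i \<in> {1..n} \<and> \<not> upper_closer \<sigma> (c i)"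
    and "\<And>i. i \<in> {1..t} \<Longrightarrow> lower_closer \<sigma> (d i)"
    and "fl n \<sigma> ` S = (\<lambda>i. (rho n \<sigma> (c (t+1-i)), d (t+1-i))) ` {1..t}"
    and "card (fl n \<sigma> ` S) = card S"
proof -
  show arc: "d i \<in> {1..n} \<and> c i = \<sigma> (d i) \<and> c i < d i" if "i \<in> {1..t}" for i
  proof -
    have "(c i, d i) \<in> lower_arcs n \<sigma>" using sub S that by blast
    from la_mem[OF this] show ?thesis by simp
  qed
  have t1: "1 \<in> {1..t}" "t \<in> {1..t}" using t by auto
  have sb1: "sameblk \<sigma> (c 1) (d 1)" using sbs arc[OF t1(1)] sameblk_sym by simp
  show sbc: "sameblk \<sigma> (c 1) (c i) \<and> sameblk \<sigma> (c 1) (d i)" if i: "i \<in> {1..t}" for i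
  proof -
    have "c 1 \<le> c i" "c i \<le> c t" using chain_le[OF cc] i by auto
    moreover have "c t < d 1" using sbd by simp
    ultimately have 1: "sameblk \<sigma> (c 1) (c i)" using sameblk_between[OF sb1] by simp
    moreover have "sameblk \<sigma> (c i) (d i)" using sbs arc[OF i] sameblk_sym by simp
    ultimately show ?thesis using sameblk_trans by blast
  qed
  show "c i \<in> {1..n} \<and> \<not> upper_closer \<sigma> (c i)" if i: "i \<in> {1..t}" for i
    using arc[OF i] permutes_inverses[OF perm] inS by (simp add: upper_closer_def)
  show "lower_closer \<sigma> (d i)" if i: "i \<in> {1..t}" for i
    using arc[OF i] by (simp add: lower_closer_def)
  have "fl n \<sigma> ` S = (\<lambda>j. (rho n \<sigma> (c j), d j)) ` {1..t}"
    unfolding S image_image by (simp add: fl_def)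
  also have "\<dots> = (\<lambda>j. (rho n \<sigma> (c j), d j)) ` ((\<lambda>i. t + 1 - i) ` {1..t})" by (simp only: rev_img)
  also have "\<dots> = (\<lambda>i. (rho n \<sigma> (c (t+1-i)), d (t+1-i))) ` {1..t}" by (simp only: image_image)
  finally show "fl n \<sigma> ` S = (\<lambda>i. (rho n \<sigma> (c (t+1-i)), d (t+1-i))) ` {1..t}" .
  show "card (fl n \<sigma> ` S) = card S" using card_image[OF inj_on_subset[OF fl_inj]] by auto
qed

lemma low_cn:
  assumes sub: "S \<subseteq> lower_arcs n \<sigma>" and t: "t \<ge> 1" and pat: "is_pattern (low_cross_shape t) t S"
  shows "is_pattern (low_nest_shape t) t (fl n \<sigma> ` S)"
proof -
  obtain c d where S: "S = (\<lambda>i. (c i, d i)) ` {1..t}" and sh: "low_cross_shape t c d"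
    and cS: "card S = t" using pat by (auto simp: is_pattern_def)
  have cc: "\<forall>i\<in>{1..<t}. c i < c (i+1)" and cd: "\<forall>i\<in>{1..<t}. d i < d (i+1)"
    and ab: "c t < d 1" using sh by (auto simp: low_cross_shape_def)
  define C where "C = (\<lambda>i. rho n \<sigma> (c (t+1-i)))"
  define D where "D = (\<lambda>i. d (t+1-i))"
  note L = low_common[OF sub t S cc ab]
  have t1: "1 \<in> {1..t}" "t \<in> {1..t}" using t by auto
  have sh2: "low_nest_shape t C D"
    unfolding low_nest_shape_def
  proof (intro conjI ballI)
    fix i assume i: "i \<in> {1..<t}"
    define j where "j = t - i"
    have j: "j \<in> {1..<t}" "t + 1 - i = j + 1" "t + 1 - (i+1) = j" using i unfolding j_def by auto
    then have j1: "j \<in> {1..t}" "j+1 \<in> {1..t}" by auto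
    show "D (i+1) < D i" unfolding D_def j(2,3) using cd j by simp
    have "sameblk \<sigma> (c j) (c (j+1))"
      using L(2)[OF j1(1)] L(2)[OF j1(2)] sameblk_sym sameblk_trans by blast
    then show "C i < C (i+1)" unfolding C_def j(2,3)
      using rho_anti L(3)[OF j1(1)] L(3)[OF j1(2)] cc j by simp
  next
    have r: "rho n \<sigma> (c 1) \<in> {1..n}" "sameblk \<sigma> (c 1) (rho n \<sigma> (c 1))"
      "lower_opener \<sigma> (rho n \<sigma> (c 1))" using rho_in[of "c 1" n \<sigma>] L(3)[OF t1(1)] lo_iff by auto
    have "sameblk \<sigma> (rho n \<sigma> (c 1)) (d 1)"
      using r(2) L(2)[OF t1(1)] sameblk_sym sameblk_trans by blast
    then show "C t < D t" unfolding C_def D_def using condA[OF r(1)] r(3) L(4)[OF t1(1)] by simp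
  qed
  have img: "fl n \<sigma> ` S = (\<lambda>i. (C i, D i)) ` {1..t}" using L(5) unfolding C_def D_def .
  have "card (fl n \<sigma> ` S) = t" using L(6) cS by simp
  then show ?thesis unfolding is_pattern_def using img sh2
    by (intro conjI exI[of _ C] exI[of _ D]) auto
qed

lemma low_nc:
  assumes sub: "S \<subseteq> lower_arcs n \<sigma>" and t: "t \<ge> 1" and pat: "is_pattern (low_nest_shape t) t S"
  shows "is_pattern (low_cross_shape t) t (fl n \<sigma> ` S)"
proof -
  obtain c d where S: "S = (\<lambda>i. (c i, d i)) ` {1..t}" and sh: "low_nest_shape t c d"
    and cS: "card S = t" using pat by (auto simp: is_pattern_def)
  have cc: "\<forall>i\<in>{1..<t}. c i < c (i+1)" and cd: "\<forall>i\<in>{1..<t}. d (i+1) < d i"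
    and ab: "c t < d t" using sh by (auto simp: low_nest_shape_def)
  have sbd: "c t < d 1" using chain_ge[OF cd, of 1 t] t ab by auto
  define C where "C = (\<lambda>i. rho n \<sigma> (c (t+1-i)))"
  define D where "D = (\<lambda>i. d (t+1-i))"
  note L = low_common[OF sub t S cc sbd]
  have t1: "1 \<in> {1..t}" "t \<in> {1..t}" using t by auto
  have sh2: "low_cross_shape t C D"
    unfolding low_cross_shape_def
  proof (intro conjI ballI)
    fix i assume i: "i \<in> {1..<t}"
    define j where "j = t - i"
    have j: "j \<in> {1..<t}" "t + 1 - i = j + 1" "t + 1 - (i+1) = j" using i unfolding j_def by auto
    then have j1: "j \<in> {1..t}" "j+1 \<in> {1..t}" by auto
    show "D i < D (i+1)" unfolding D_def j(2,3) using cd j by simp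
    have "sameblk \<sigma> (c j) (c (j+1))"
      using L(2)[OF j1(1)] L(2)[OF j1(2)] sameblk_sym sameblk_trans by blast
    then show "C i < C (i+1)" unfolding C_def j(2,3)
      using rho_anti L(3)[OF j1(1)] L(3)[OF j1(2)] cc j by simp
  next
    have r: "rho n \<sigma> (c 1) \<in> {1..n}" "sameblk \<sigma> (c 1) (rho n \<sigma> (c 1))"
      "lower_opener \<sigma> (rho n \<sigma> (c 1))" using rho_in[of "c 1" n \<sigma>] L(3)[OF t1(1)] lo_iff by auto
    have "sameblk \<sigma> (rho n \<sigma> (c 1)) (d t)"
      using r(2) L(2)[OF t1(2)] sameblk_sym sameblk_trans by blast
    then show "C t < D 1" unfolding C_def D_def using condA[OF r(1)] r(3) L(4)[OF t1(2)] by simp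
  qed
  have img: "fl n \<sigma> ` S = (\<lambda>i. (C i, D i)) ` {1..t}" using L(5) unfolding C_def D_def .
  have "card (fl n \<sigma> ` S) = t" using L(6) cS by simp
  then show ?thesis unfolding is_pattern_def using img sh2
    by (intro conjI exI[of _ C] exI[of _ D]) auto
qed

end



lemma main_step:
  assumes perm: "\<sigma> permutes {1..n}" and oc: "typeOC n \<sigma>" and t: "t \<ge> 1"
  shows "phi n \<sigma> permutes {1..n} \<and> typeOC n (phi n \<sigma>) \<and> phi n (phi n \<sigma>) = \<sigma> \<and>
         nu n t (phi n \<sigma>) = cu n t \<sigma> \<and> nl n t (phi n \<sigma>) = cl n t \<sigma>"
proof -
  obtain r s where "OC n \<sigma> r s" using typeOC_OC[OF oc perm] by blast
  interpret A: OC n \<sigma> r s by fact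
  interpret B: OC n "phi n \<sigma>" r s by (rule A.OC_phi)
  have P: "phi n \<sigma> permutes {1..n}" by (rule A.phi_perm)
  have T: "typeOC n (phi n \<sigma>)" unfolding typeOC_def
    using B.s0 B.sr B.smono B.blocks by blast
  have sb_eq: "sameblk (phi n \<sigma>) x y \<longleftrightarrow> sameblk \<sigma> x y" if xn: "x \<in> {1..n}" for x y
  proof
    assume "sameblk (phi n \<sigma>) x y"
    then obtain q where "q \<in> {1..r}" "x \<in> {s (q-1) + 1 .. s q}" "y \<in> {s (q-1) + 1 .. s q}"
      using B.same_blk[OF xn] by blast
    then show "sameblk \<sigma> x y" by (rule A.blk_same)
  next
    assume "sameblk \<sigma> x y"
    then obtain q where "q \<in> {1..r}" "x \<in> {s (q-1) + 1 .. s q}" "y \<in> {s (q-1) + 1 .. s q}"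
      using A.same_blk[OF xn] by blast
    then show "sameblk (phi n \<sigma>) x y" by (rule B.blk_same)
  qed
  have rho_eq: "rho n (phi n \<sigma>) = rho n \<sigma>"
  proof
    fix x show "rho n (phi n \<sigma>) x = rho n \<sigma> x"
    proof (cases "x \<in> {1..n}")
      case True
      have "{y\<in>{1..n}. sameblk (phi n \<sigma>) x y \<and> (upper_closer (phi n \<sigma>) y \<longleftrightarrow> upper_closer (phi n \<sigma>) x)}
          = {y\<in>{1..n}. sameblk \<sigma> x y \<and> (upper_closer \<sigma> y \<longleftrightarrow> upper_closer \<sigma> x)}"
        using sb_eq[OF True] A.uc_phi by simp
      then show ?thesis using True by (simp add: rho_def)
    qed (simp add: rho_out)
  qed
  have PP: "phi n (phi n \<sigma>) = \<sigma>"
    unfolding phi_def[of n "phi n \<sigma>"] rho_eq by (simp add: phi_def fun_eq_iff rho_rho)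
  have fu_eq: "fu n (phi n \<sigma>) = fu n \<sigma>" by (simp add: fu_def rho_eq fun_eq_iff)
  have fl_eq: "fl n (phi n \<sigma>) = fl n \<sigma>" by (simp add: fl_def rho_eq fun_eq_iff)
  have injI1: "inj_on (image (fu n \<sigma>)) X" for X
    by (rule inj_onI) (simp add: inj_image_eq_iff[OF fu_inj])
  have injI2: "inj_on (image (fl n \<sigma>)) X" for X
    by (rule inj_onI) (simp add: inj_image_eq_iff[OF fl_inj])
  have U: "{T. T \<subseteq> upper_arcs n (phi n \<sigma>) \<and> is_pattern (up_nest_shape t) t T}
     = image (fu n \<sigma>) ` {S. S \<subseteq> upper_arcs n \<sigma> \<and> is_pattern (up_cross_shape t) t S}"
  proof
    show "{T. T \<subseteq> upper_arcs n (phi n \<sigma>) \<and> is_pattern (up_nest_shape t) t T}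
      \<subseteq> image (fu n \<sigma>) ` {S. S \<subseteq> upper_arcs n \<sigma> \<and> is_pattern (up_cross_shape t) t S}"
    proof
      fix T assume "T \<in> {T. T \<subseteq> upper_arcs n (phi n \<sigma>) \<and> is_pattern (up_nest_shape t) t T}"
      then have T1: "T \<subseteq> upper_arcs n (phi n \<sigma>)" and T2: "is_pattern (up_nest_shape t) t T" by auto
      have "is_pattern (up_cross_shape t) t (fu n \<sigma> ` T)"
        using B.up_nc[OF T1 t T2] unfolding fu_eq .
      moreover have "fu n \<sigma> ` T \<subseteq> upper_arcs n \<sigma>"
        using T1 unfolding A.up_arcs_phi using fu_ff[of n \<sigma> "upper_arcs n \<sigma>"] by blast
      moreover have "T = fu n \<sigma> ` (fu n \<sigma> ` T)" by (simp add: fu_ff)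
      ultimately show "T \<in> image (fu n \<sigma>) ` {S. S \<subseteq> upper_arcs n \<sigma> \<and> is_pattern (up_cross_shape t) t S}"
        by blast
    qed
    show "image (fu n \<sigma>) ` {S. S \<subseteq> upper_arcs n \<sigma> \<and> is_pattern (up_cross_shape t) t S}
      \<subseteq> {T. T \<subseteq> upper_arcs n (phi n \<sigma>) \<and> is_pattern (up_nest_shape t) t T}"
      using A.up_cn[OF _ t] unfolding A.up_arcs_phi by blast
  qed
  have L: "{T. T \<subseteq> lower_arcs n (phi n \<sigma>) \<and> is_pattern (low_nest_shape t) t T}
     = image (fl n \<sigma>) ` {S. S \<subseteq> lower_arcs n \<sigma> \<and> is_pattern (low_cross_shape t) t S}"
  proof
    show "{T. T \<subseteq> lower_arcs n (phi n \<sigma>) \<and> is_pattern (low_nest_shape t) t T}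
      \<subseteq> image (fl n \<sigma>) ` {S. S \<subseteq> lower_arcs n \<sigma> \<and> is_pattern (low_cross_shape t) t S}"
    proof
      fix T assume "T \<in> {T. T \<subseteq> lower_arcs n (phi n \<sigma>) \<and> is_pattern (low_nest_shape t) t T}"
      then have T1: "T \<subseteq> lower_arcs n (phi n \<sigma>)" and T2: "is_pattern (low_nest_shape t) t T" by auto
      have "is_pattern (low_cross_shape t) t (fl n \<sigma> ` T)"
        using B.low_nc[OF T1 t T2] unfolding fl_eq .
      moreover have "fl n \<sigma> ` T \<subseteq> lower_arcs n \<sigma>"
        using T1 unfolding A.low_arcs_phi using fl_ff[of n \<sigma> "lower_arcs n \<sigma>"] by blast
      moreover have "T = fl n \<sigma> ` (fl n \<sigma> ` T)" by (simp add: fl_ff)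
      ultimately show "T \<in> image (fl n \<sigma>) ` {S. S \<subseteq> lower_arcs n \<sigma> \<and> is_pattern (low_cross_shape t) t S}"
        by blast
    qed
    show "image (fl n \<sigma>) ` {S. S \<subseteq> lower_arcs n \<sigma> \<and> is_pattern (low_cross_shape t) t S}
      \<subseteq> {T. T \<subseteq> lower_arcs n (phi n \<sigma>) \<and> is_pattern (low_nest_shape t) t T}"
      using A.low_cn[OF _ t] unfolding A.low_arcs_phi by blast
  qed
  have "nu n t (phi n \<sigma>) = cu n t \<sigma>"
    unfolding nu_def cu_def U by (rule card_image[OF injI1])
  moreover have "nl n t (phi n \<sigma>) = cl n t \<sigma>"
    unfolding nl_def cl_def L by (rule card_image[OF injI2])
  ultimately show ?thesis using P T PP by simp
qed

lemma swap:
  assumes perm: "\<sigma> permutes {1..n}" and oc: "typeOC n \<sigma>" and t: "t \<ge> 1"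
  shows "nu n t (phi n \<sigma>) = cu n t \<sigma> \<and> cu n t (phi n \<sigma>) = nu n t \<sigma> \<and>
         nl n t (phi n \<sigma>) = cl n t \<sigma> \<and> cl n t (phi n \<sigma>) = nl n t \<sigma>"
proof -
  note M = main_step[OF perm oc t]
  note M2 = main_step[of "phi n \<sigma>" n t] M
  show ?thesis using M M2 t by auto
qed

theorem mainTheorem4:
  fixes n :: nat and \<alpha> \<beta> \<gamma> \<delta> :: "nat \<Rightarrow> nat"
  assumes "n \<ge> 1"
  shows "card {\<sigma>. \<sigma> permutes {1..n} \<and> typeOC n \<sigma> \<and>
            (\<forall>t\<ge>2. nu n t \<sigma> = \<alpha> t \<and> cu n t \<sigma> = \<beta> t \<and> nl n t \<sigma> = \<gamma> t \<and> cl n t \<sigma> = \<delta> t)}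
       = card {\<sigma>. \<sigma> permutes {1..n} \<and> typeOC n \<sigma> \<and>
            (\<forall>t\<ge>2. nu n t \<sigma> = \<beta> t \<and> cu n t \<sigma> = \<alpha> t \<and> nl n t \<sigma> = \<delta> t \<and> cl n t \<sigma> = \<gamma> t)}"
proof (rule bij_betw_same_card[where f="phi n"])
  let ?A = "{\<sigma>. \<sigma> permutes {1..n} \<and> typeOC n \<sigma> \<and>
            (\<forall>t\<ge>2. nu n t \<sigma> = \<alpha> t \<and> cu n t \<sigma> = \<beta> t \<and> nl n t \<sigma> = \<gamma> t \<and> cl n t \<sigma> = \<delta> t)}"
  let ?B = "{\<sigma>. \<sigma> permutes {1..n} \<and> typeOC n \<sigma> \<and>
            (\<forall>t\<ge>2. nu n t \<sigma> = \<beta> t \<and> cu n t \<sigma> = \<alpha> t \<and> nl n t \<sigma> = \<delta> t \<and> cl n t \<sigma> = \<gamma> t)}"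
  have pp: "phi n (phi n \<sigma>) = \<sigma>" if "\<sigma> permutes {1..n}" "typeOC n \<sigma>" for \<sigma>
    using main_step[OF that, of 1] by simp
  have pa: "phi n \<sigma> permutes {1..n} \<and> typeOC n (phi n \<sigma>)" if "\<sigma> permutes {1..n}" "typeOC n \<sigma>" for \<sigma>
    using main_step[OF that, of 1] by simp
  show "bij_betw (phi n) ?A ?B"
  proof (rule bij_betw_byWitness[where f'="phi n"])
    show "\<forall>a\<in>?A. phi n (phi n a) = a" using pp by blast
    show "\<forall>a\<in>?B. phi n (phi n a) = a" using pp by blast
    show "phi n ` ?A \<subseteq> ?B"
    proof
      fix \<tau> assume "\<tau> \<in> phi n ` ?A"
      then obtain \<sigma> where s: "\<sigma> \<in> ?A" "\<tau> = phi n \<sigma>" by blast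
      then have h: "\<sigma> permutes {1..n}" "typeOC n \<sigma>" by auto
      show "\<tau> \<in> ?B" using s pa[OF h] swap[OF h] by simp
    qed
    show "phi n ` ?B \<subseteq> ?A"
    proof
      fix \<tau> assume "\<tau> \<in> phi n ` ?B"
      then obtain \<sigma> where s: "\<sigma> \<in> ?B" "\<tau> = phi n \<sigma>" by blast
      then have h: "\<sigma> permutes {1..n}" "typeOC n \<sigma>" by auto
      show "\<tau> \<in> ?A" using s pa[OF h] swap[OF h] by simp
    qed
  qed
qed


end
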